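(* Let $\dot{\mathcal C}$ be a colored chain on vertices $Z_1\subset Z_2\subset\dots\subset Z_t$, where $Z_i$ has color $c_i$, and let $\bar c_i$ denote the color other than $c_i$. Fix a blue/red coloring of a Boolean lattice $\mathcal Q$ which contains no copy of $\dot{\mathcal C}$. Then: (i) every $Z\in\Phi_1$ has color $\bar c_1$; (ii) for $2\le i\le t$, if $c_i\ne c_{i-1}$, then every $Z\in\Phi_i$ has color $\bar c_i$; (iii) for $2\le i\le t$, if $c_i=c_{i-1}$, then every vertex of $M_i$ has color $c_i$ and every vertex of $\Phi_i\setminus M_i$ has color $\bar c_i$.
   Context: A Boolean lattice $\mathcal Q=\mathcal Q(\mathcal Z)$ is the poset of all subsets of a finite set $\mathcal Z$ ordered by inclusion; for $X\in\mathcal Q$, $\mathcal Q|_\varnothing^X=\{Y\in\mathcal Q: Y\subseteq X\}$, with the inherited coloring. In a colored poset, a copy of a colored poset $\dot P$ is an induced subposet isomorphic to $P$ with each vertex having the color of the corresponding vertex of $\dot P$. For $0\le i\le t$, $\dot{\mathcal C}[i]$ is the colored subchain $Z_1,\dots,Z_i$ of $\dot{\mathcal C}$ (with $\dot{\mathcal C}[0]$ empty). The phase of $X\in\mathcal Q$ is $\varphi(X)=\max\{i\in\{1,\dots,t+1\}: \mathcal Q|_\varnothing^X \text{ contains a copy of } \dot{\mathcal C}[i-1]\}$. $\Phi_i=\{X\in\mathcal Q:\varphi(X)=i\}$ and $M_i$ is the set of minimal elements (w.r.t. inclusion) of $\Phi_i$. *)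

theory Defs
  imports Main
begin

datatype color = Blue | Red

fun other :: "color \<Rightarrow> color" where
  "other Blue = Red" | "other Red = Blue"

definition has_copy :: "('a set \<Rightarrow> color) \<Rightarrow> 'a set set \<Rightarrow> color list \<Rightarrow> bool" where
  "has_copy col F cs \<longleftrightarrow> (\<exists>Xs. length Xs = length cs \<and> set Xs \<subseteq> F \<and>
       sorted_wrt (\<subset>) Xs \<and> (\<forall>j < length cs. col (Xs ! j) = cs ! j))"

definition phase :: "('a set \<Rightarrow> color) \<Rightarrow> color list \<Rightarrow> 'a set \<Rightarrow> nat" where
  "phase col cs X = Max {i \<in> {1..length cs + 1}. has_copy col (Pow X) (take (i - 1) cs)}"

definition Phi :: "'a set \<Rightarrow> ('a set \<Rightarrow> color) \<Rightarrow> color list \<Rightarrow> nat \<Rightarrow> 'a set set" where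
  "Phi Z col cs i = {X \<in> Pow Z. phase col cs X = i}"

definition Mins :: "'a set set \<Rightarrow> 'a set set" where
  "Mins A = {X \<in> A. \<forall>Y \<in> A. Y \<subseteq> X \<longrightarrow> Y = X}"

end

theory Submission
  imports Defs
begin

lemma copy_mono: "has_copy col F cs \<Longrightarrow> F \<subseteq> G \<Longrightarrow> has_copy col G cs"
  unfolding has_copy_def by blast

lemma other_neq: "c \<noteq> d \<Longrightarrow> c = other d"
  by (cases c; cases d) auto

lemma phase_ge:
  assumes "1 \<le> i" "i \<le> length cs + 1" "has_copy col (Pow X) (take (i-1) cs)"
  shows "i \<le> phase col cs X"
  unfolding phase_def using assms by (intro Max_ge) auto

lemma phase_props:
  "has_copy col (Pow X) (take (phase col cs X - 1) cs) \<and> 1 \<le> phase col cs X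
   \<and> phase col cs X \<le> length cs + 1"
proof -
  let ?S = "{i \<in> {1..length cs + 1}. has_copy col (Pow X) (take (i - 1) cs)}"
  have "1 \<in> ?S" unfolding has_copy_def by auto
  hence "Max ?S \<in> ?S" by (intro Max_in) auto
  thus ?thesis unfolding phase_def by auto
qed

lemma phase_mono: "Y \<subseteq> X \<Longrightarrow> phase col cs Y \<le> phase col cs X"
  using phase_props[of col Y cs] phase_ge[of "phase col cs Y" cs col X] copy_mono[of col "Pow Y" _ "Pow X"]
  by auto

lemma last_copy:
  assumes "has_copy col (Pow X) (take k cs)" "1 \<le> k" "k \<le> length cs"
  shows "\<exists>Y. Y \<subseteq> X \<and> col Y = cs!(k-1) \<and> has_copy col (Pow Y) (take k cs)"
proof -
  obtain Xs where Xs: "length Xs = length (take k cs)" "set Xs \<subseteq> Pow X" "sorted_wrt (\<subset>) Xs"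
    "\<forall>j < length (take k cs). col (Xs ! j) = take k cs ! j"
    using assms(1) unfolding has_copy_def by blast
  have len: "length Xs = k" using Xs(1) assms by simp
  define Y where "Y = Xs ! (k-1)"
  have Yin: "Y \<in> set Xs" using len assms(2) unfolding Y_def by auto
  have sub: "set Xs \<subseteq> Pow Y"
  proof
    fix A assume "A \<in> set Xs"
    then obtain j where j: "j < k" "A = Xs ! j" using len by (metis in_set_conv_nth)
    show "A \<in> Pow Y"
    proof (cases "j = k - 1")
      case True thus ?thesis using j Y_def by auto
    next
      case False
      hence "j < k - 1" using j by auto
      hence "Xs ! j \<subset> Xs ! (k-1)" using Xs(3) len assms(2)
        by (metis diff_less less_numeral_extra(1) order_less_le_trans sorted_wrt_nth_less)
      thus ?thesis using j Y_def by auto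
    qed
  qed
  have "col Y = cs ! (k-1)" using Xs(4) len assms unfolding Y_def by auto
  moreover have "Y \<subseteq> X" using Yin Xs(2) by auto
  moreover have "has_copy col (Pow Y) (take k cs)"
    unfolding has_copy_def using Xs sub by blast
  ultimately show ?thesis by blast
qed

lemma extend:
  assumes "has_copy col (Pow Y) (take k cs)" "Y \<subset> X" "k < length cs" "col X = cs ! k"
  shows "has_copy col (Pow X) (take (Suc k) cs)"
proof -
  obtain Xs where Xs: "length Xs = length (take k cs)" "set Xs \<subseteq> Pow Y" "sorted_wrt (\<subset>) Xs"
    "\<forall>j < length (take k cs). col (Xs ! j) = take k cs ! j"
    using assms(1) unfolding has_copy_def by blast
  have len: "length Xs = k" using Xs(1) assms by simp
  have tk: "take (Suc k) cs = take k cs @ [cs ! k]" using assms(3) by (simp add: take_Suc_conv_app_nth)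
  show ?thesis unfolding has_copy_def tk
  proof (intro exI[of _ "Xs @ [X]"] conjI)
    show "length (Xs @ [X]) = length (take k cs @ [cs ! k])" using len assms by simp
    show "set (Xs @ [X]) \<subseteq> Pow X" using Xs(2) assms(2) by auto
    show "sorted_wrt (\<subset>) (Xs @ [X])" using Xs(2,3) assms(2) by (auto simp: sorted_wrt_append)
    show "\<forall>j<length (take k cs @ [cs ! k]). col ((Xs @ [X]) ! j) = (take k cs @ [cs ! k]) ! j"
    proof (intro allI impI)
      fix j assume "j < length (take k cs @ [cs ! k])"
      hence "j < Suc k" using assms by simp
      thus "col ((Xs @ [X]) ! j) = (take k cs @ [cs ! k]) ! j"
        using Xs(4) len assms by (cases "j < k") (auto simp: nth_append)
    qed
  qed
qed

theorem proposition14: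
  fixes Z :: "'a set" and cs :: "color list" and col :: "'a set \<Rightarrow> color"
  assumes "finite Z" and "cs \<noteq> []"
    and "\<not> has_copy col (Pow Z) cs"
  shows "(\<forall>X \<in> Phi Z col cs 1. col X = other (cs ! 0))
    \<and> (\<forall>i. 2 \<le> i \<and> i \<le> length cs \<and> cs ! (i - 1) \<noteq> cs ! (i - 2) \<longrightarrow>
           (\<forall>X \<in> Phi Z col cs i. col X = other (cs ! (i - 1))))
    \<and> (\<forall>i. 2 \<le> i \<and> i \<le> length cs \<and> cs ! (i - 1) = cs ! (i - 2) \<longrightarrow>
           (\<forall>X \<in> Mins (Phi Z col cs i). col X = cs ! (i - 1))
         \<and> (\<forall>X \<in> Phi Z col cs i - Mins (Phi Z col cs i). col X = other (cs ! (i - 1))))"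
proof (intro conjI allI impI ballI)
  fix X assume X: "X \<in> Phi Z col cs 1"
  show "col X = other (cs ! 0)"
  proof (rule other_neq, rule notI)
    assume c: "col X = cs ! 0"
    have "has_copy col (Pow X) (take (2-1) cs)"
      unfolding has_copy_def using assms(2) c
      by (intro exI[of _ "[X]"]) (cases cs, auto)
    hence "2 \<le> phase col cs X" using assms(2) by (intro phase_ge) (auto simp: neq_Nil_conv)
    thus False using X unfolding Phi_def by auto
  qed
next
  fix i X assume i: "2 \<le> i \<and> i \<le> length cs \<and> cs ! (i - 1) \<noteq> cs ! (i - 2)"
    and X: "X \<in> Phi Z col cs i"
  show "col X = other (cs ! (i - 1))"
  proof (rule other_neq, rule notI)
    assume c: "col X = cs ! (i - 1)"
    have ph: "phase col cs X = i" using X unfolding Phi_def by auto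
    hence "has_copy col (Pow X) (take (i-1) cs)" using phase_props[of col X cs] by simp
    hence "\<exists>Y. Y \<subseteq> X \<and> col Y = cs!(i-1-1) \<and> has_copy col (Pow Y) (take (i-1) cs)"
      using i by (intro last_copy) auto
    moreover have "i - 1 - 1 = i - 2" by simp
    ultimately obtain Y where Y: "Y \<subseteq> X" "col Y = cs!(i-2)" "has_copy col (Pow Y) (take (i-1) cs)"
      by metis
    have "Y \<noteq> X" using Y(2) c i by auto
    hence "has_copy col (Pow X) (take (Suc (i-1)) cs)" using Y c i
      by (intro extend[of col Y]) auto
    hence "i + 1 \<le> phase col cs X" using i by (intro phase_ge) auto
    thus False using ph by simp
  qed
next
  fix i X assume i: "2 \<le> i \<and> i \<le> length cs \<and> cs ! (i - 1) = cs ! (i - 2)"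
    and X: "X \<in> Mins (Phi Z col cs i)"
  show "col X = cs ! (i - 1)"
  proof (rule ccontr)
    assume c: "col X \<noteq> cs ! (i - 1)"
    have ph: "phase col cs X = i" and XZ: "X \<subseteq> Z" using X unfolding Phi_def Mins_def by auto
    hence "has_copy col (Pow X) (take (i-1) cs)" using phase_props[of col X cs] by simp
    hence "\<exists>Y. Y \<subseteq> X \<and> col Y = cs!(i-1-1) \<and> has_copy col (Pow Y) (take (i-1) cs)"
      using i by (intro last_copy) auto
    moreover have "i - 1 - 1 = i - 2" by simp
    ultimately obtain Y where Y: "Y \<subseteq> X" "col Y = cs!(i-2)" "has_copy col (Pow Y) (take (i-1) cs)"
      by metis
    have "Y \<noteq> X" using Y(2) c i by auto
    have "i \<le> phase col cs Y" using Y(3) i by (intro phase_ge) auto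
    moreover have "phase col cs Y \<le> i" using phase_mono[OF Y(1), of col cs] ph by simp
    ultimately have "Y \<in> Phi Z col cs i" using Y(1) XZ unfolding Phi_def by auto
    hence "Y = X" using X Y(1) unfolding Mins_def by auto
    thus False using \<open>Y \<noteq> X\<close> by simp
  qed
next
  fix i X assume i: "2 \<le> i \<and> i \<le> length cs \<and> cs ! (i - 1) = cs ! (i - 2)"
    and X: "X \<in> Phi Z col cs i - Mins (Phi Z col cs i)"
  show "col X = other (cs ! (i - 1))"
  proof (rule other_neq, rule notI)
    assume c: "col X = cs ! (i - 1)"
    have ph: "phase col cs X = i" using X unfolding Phi_def by auto
    obtain Y where Y: "Y \<in> Phi Z col cs i" "Y \<subseteq> X" "Y \<noteq> X"
      using X unfolding Mins_def by auto
    have "phase col cs Y = i" using Y(1) unfolding Phi_def by auto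
    hence "has_copy col (Pow Y) (take (i-1) cs)" using phase_props[of col Y cs] by simp
    hence "has_copy col (Pow X) (take (Suc (i-1)) cs)" using Y c i
      by (intro extend[of col Y]) auto
    hence "i + 1 \<le> phase col cs X" using i by (intro phase_ge) auto
    thus False using ph by simp
  qed
qed

end
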